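(* Let $X$, $Z$ be topological vector spaces, $C\subseteq Z$ a nonempty closed convex cone with $C^-\neq\{0\}$, $f:X\to\mathcal{F}(Z,C)$ convex and $x_0\in{\rm dom\,} f$. If $f$ is lattice-bounded above on a neighborhood of $x_0$, or efficient at $x_0$, or upper lattice-semicontinuous at $x_0$, or lower continuous at $x_0$, then $f$ has the corresponding property (lattice-bounded above on a neighborhood of $x$, efficient at $x$, upper lattice-semicontinuous at $x$, lower continuous at $x$, respectively) at every $x\in\operatorname{Int}({\rm dom\,} f)$.
   Context: $\mathcal{F}(Z,C)=\{A\subseteq Z\colon A=\operatorname{cl}(A+C)\}$ (empty set included); $C^-=\{z^*\in Z^*\colon z^*(z)\le0\ \forall z\in C\}$; ${\rm dom\,} f=\{x\colon f(x)\neq\emptyset\}$. $f$ is convex iff $tf(x_1)+(1-t)f(x_2)\subseteq f(tx_1+(1-t)x_2)$ for all $x_1,x_2$, $t\in(0,1)$. Lattice-bounded above on $M$: there is $a\in Z$ with $a\in f(x)$ for all $x\in M$. Efficient at $x_0$: there exist a neighborhood $U$ of $x_0$ and a bounded set $B\subseteq Z$ (absorbed by every neighborhood of $0$) with $f(x)\cap B\neq\emptyset$ for all $x\in U$. Upper lattice-semicontinuous at $x_0$: $f(x_0)\subseteq\operatorname{cl}\bigcup_{U\in\mathcal{N}(x_0)}\bigcap_{x\in U}f(x)$, $\mathcal{N}(x_0)$ the neighborhoods of $x_0$. Lower continuous at $x_0$: for every $z_0\in f(x_0)$ and every neighborhood $V$ of $z_0$ there is a neighborhood $U$ of $x_0$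 with $f(x)\cap V\neq\emptyset$ for all $x\in U$. *)

theory Defs
  imports "HOL-Analysis.Analysis"
begin

definition is_tvs :: "('a::{real_vector,topological_space}) itself \<Rightarrow> bool" where
  "is_tvs _ \<longleftrightarrow>
     continuous_on UNIV (\<lambda>p::'a \<times> 'a. fst p + snd p) \<and>
     continuous_on UNIV (\<lambda>p::real \<times> 'a. fst p *\<^sub>R snd p)"

definition nbhds :: "'a::topological_space \<Rightarrow> 'a set set" where
  "nbhds x = {U. \<exists>V. open V \<and> x \<in> V \<and> V \<subseteq> U}"

definition msum :: "'a::real_vector set \<Rightarrow> 'a set \<Rightarrow> 'a set" where
  "msum A B = {a + b | a b. a \<in> A \<and> b \<in> B}"

definition FZC :: "'z::{real_vector,topological_space} set \<Rightarrow> 'z set set" where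
  "FZC C = {A. A = closure (msum A C)}"

definition neg_dual_cone :: "'z::{real_vector,topological_space} set \<Rightarrow> ('z \<Rightarrow> real) set" where
  "neg_dual_cone C = {g. linear g \<and> continuous_on UNIV g \<and> (\<forall>z\<in>C. g z \<le> 0)}"

definition sv_dom :: "('x \<Rightarrow> 'z set) \<Rightarrow> 'x set" where
  "sv_dom f = {x. f x \<noteq> {}}"

definition sv_convex :: "('x::real_vector \<Rightarrow> 'z::real_vector set) \<Rightarrow> bool" where
  "sv_convex f \<longleftrightarrow> (\<forall>x1 x2 t. 0 < t \<and> t < 1 \<longrightarrow>
      msum ((\<lambda>z. t *\<^sub>R z) ` f x1) ((\<lambda>z. (1 - t) *\<^sub>R z) ` f x2)
        \<subseteq> f (t *\<^sub>R x1 + (1 - t) *\<^sub>R x2))"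

definition lattice_bounded_above_on :: "('x \<Rightarrow> 'z set) \<Rightarrow> 'x set \<Rightarrow> bool" where
  "lattice_bounded_above_on f M \<longleftrightarrow> (\<exists>a. \<forall>x\<in>M. a \<in> f x)"

definition lattice_bounded_above_near :: "('x::topological_space \<Rightarrow> 'z set) \<Rightarrow> 'x \<Rightarrow> bool" where
  "lattice_bounded_above_near f x0 \<longleftrightarrow> (\<exists>U\<in>nbhds x0. lattice_bounded_above_on f U)"

definition tvs_bounded :: "'z::{real_vector,topological_space} set \<Rightarrow> bool" where
  "tvs_bounded B \<longleftrightarrow> (\<forall>V\<in>nbhds 0. \<exists>r>0. \<forall>t. \<bar>t\<bar> \<ge> r \<longrightarrow> B \<subseteq> (\<lambda>v. t *\<^sub>R v) ` V)"

definition efficient_at :: "('x::topological_space \<Rightarrow> 'z::{real_vector,topological_space} set) \<Rightarrow> 'x \<Rightarrow> bool" where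
  "efficient_at f x0 \<longleftrightarrow> (\<exists>U\<in>nbhds x0. \<exists>B. tvs_bounded B \<and> (\<forall>x\<in>U. f x \<inter> B \<noteq> {}))"

definition upper_lattice_sc :: "('x::topological_space \<Rightarrow> 'z::topological_space set) \<Rightarrow> 'x \<Rightarrow> bool" where
  "upper_lattice_sc f x0 \<longleftrightarrow> f x0 \<subseteq> closure (\<Union>U\<in>nbhds x0. \<Inter>x\<in>U. f x)"

definition lower_continuous_at :: "('x::topological_space \<Rightarrow> 'z::topological_space set) \<Rightarrow> 'x \<Rightarrow> bool" where
  "lower_continuous_at f x0 \<longleftrightarrow>
     (\<forall>z0\<in>f x0. \<forall>V\<in>nbhds z0. \<exists>U\<in>nbhds x0. \<forall>x\<in>U. f x \<inter> V \<noteq> {})"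

end

theory Submission
  imports Defs
begin

lemma ovim: "continuous_on UNIV h \<Longrightarrow> open V \<Longrightarrow> open (h -` V)"
  using continuous_on_open_vimage[of UNIV h] by auto

lemma tvs_add:
  fixes f g :: "'b::topological_space \<Rightarrow> 'a::{real_vector,topological_space}"
  assumes "is_tvs TYPE('a)" "continuous_on UNIV f" "continuous_on UNIV g"
  shows "continuous_on UNIV (\<lambda>x. f x + g x)"
proof -
  have a: "continuous_on UNIV (\<lambda>p::'a \<times> 'a. fst p + snd p)" using assms(1) unfolding is_tvs_def by auto
  have "continuous_on UNIV (\<lambda>x. (\<lambda>p::'a \<times> 'a. fst p + snd p) (f x, g x))"
    by (rule continuous_on_compose2[OF a continuous_on_Pair[OF assms(2,3)]]) auto
  then show ?thesis by simp
qed

lemma tvs_scale: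
  fixes f :: "'b::topological_space \<Rightarrow> real" and g :: "'b \<Rightarrow> 'a::{real_vector,topological_space}"
  assumes "is_tvs TYPE('a)" "continuous_on UNIV f" "continuous_on UNIV g"
  shows "continuous_on UNIV (\<lambda>x. f x *\<^sub>R g x)"
proof -
  have a: "continuous_on UNIV (\<lambda>p::real \<times> 'a. fst p *\<^sub>R snd p)" using assms(1) unfolding is_tvs_def by auto
  have "continuous_on UNIV (\<lambda>x. (\<lambda>p::real \<times> 'a. fst p *\<^sub>R snd p) (f x, g x))"
    by (rule continuous_on_compose2[OF a continuous_on_Pair[OF assms(2,3)]]) auto
  then show ?thesis by simp
qed

lemma tvs_affine_cont:
  fixes c :: "'a::{real_vector,topological_space}"
  assumes "is_tvs TYPE('a)"
  shows "continuous_on UNIV (\<lambda>w. c + l *\<^sub>R w)"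
  by (rule tvs_add[OF assms continuous_on_const tvs_scale[OF assms continuous_on_const continuous_on_id]])

lemma aff_nbhd:
  fixes x x0 :: "'a::{real_vector,topological_space}"
  assumes "is_tvs TYPE('a)" "U \<in> nbhds x0" "l > 0"
  shows "(\<lambda>u. x + l *\<^sub>R (u - x0)) ` U \<in> nbhds x"
proof -
  obtain V where V: "open V" "x0 \<in> V" "V \<subseteq> U" using assms(2) unfolding nbhds_def by auto
  define h where "h = (\<lambda>w. (x0 - (1/l) *\<^sub>R x) + (1/l) *\<^sub>R w)"
  have "open (h -` V)" unfolding h_def by (rule ovim[OF tvs_affine_cont[OF assms(1)] V(1)])
  moreover have "x \<in> h -` V" using V unfolding h_def by simp
  moreover have "h -` V \<subseteq> (\<lambda>u. x + l *\<^sub>R (u - x0)) ` U"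
  proof
    fix w assume "w \<in> h -` V"
    hence "h w \<in> U" using V by auto
    moreover have "w = x + l *\<^sub>R (h w - x0)" unfolding h_def using assms(3)
      by (simp add: algebra_simps)
    ultimately show "w \<in> (\<lambda>u. x + l *\<^sub>R (u - x0)) ` U" by blast
  qed
  ultimately show ?thesis unfolding nbhds_def by blast
qed

lemma small_kappa:
  fixes w z :: "'a::{real_vector,topological_space}"
  assumes "is_tvs TYPE('a)" "open T" "z \<in> T"
  shows "\<exists>k. 0 < k \<and> k < 1 \<and> k *\<^sub>R w + (1 - k) *\<^sub>R z \<in> T"
proof -
  define g where "g = (\<lambda>k::real. k *\<^sub>R w + (1 - k) *\<^sub>R z)"
  have c: "continuous_on UNIV g" unfolding g_def
    by (intro tvs_add[OF assms(1)] tvs_scale[OF assms(1)] continuous_intros)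
  have "open (g -` T)" by (rule ovim[OF c assms(2)])
  moreover have "0 \<in> g -` T" using assms unfolding g_def by simp
  ultimately obtain e where e: "e > 0" "ball 0 e \<subseteq> g -` T" using open_contains_ball by blast
  define k where "k = min (e/2) (1/2)"
  have "k \<in> ball 0 e" using e unfolding k_def by auto
  then have "g k \<in> T" using e by auto
  moreover have "0 < k" "k < 1" using e unfolding k_def by auto
  ultimately show ?thesis unfolding g_def by blast
qed

lemma conv2:
  assumes "sv_convex f" "0 < t" "t < 1" "a \<in> f u" "b \<in> f y"
  shows "t *\<^sub>R a + (1 - t) *\<^sub>R b \<in> f (t *\<^sub>R u + (1 - t) *\<^sub>R y)"
  using assms unfolding sv_convex_def msum_def by blast

lemma decomp:
  fixes f :: "'x::{real_vector,topological_space} \<Rightarrow> 'z set"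
  assumes "is_tvs TYPE('x)" "x \<in> interior (sv_dom f)"
  shows "\<exists>t y. 0 < t \<and> t < 1 \<and> y \<in> sv_dom f \<and> x = t *\<^sub>R x0 + (1 - t) *\<^sub>R y"
proof -
  define g where "g = (\<lambda>e::real. x + e *\<^sub>R (x - x0))"
  have c: "continuous_on UNIV g" unfolding g_def
    by (intro tvs_add[OF assms(1)] tvs_scale[OF assms(1)] continuous_intros)
  have "open (g -` interior (sv_dom f))" by (rule ovim[OF c]) simp
  moreover have "0 \<in> g -` interior (sv_dom f)" using assms unfolding g_def by simp
  ultimately obtain e where e: "e > 0" "ball 0 e \<subseteq> g -` interior (sv_dom f)" using open_contains_ball by blast
  define d where "d = e/2"
  have "d \<in> ball 0 e" using e unfolding d_def by auto
  then have y: "g d \<in> sv_dom f" using e interior_subset by blast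
  have d: "d > 0" using e unfolding d_def by auto
  define t where "t = d / (1 + d)"
  have t: "0 < t" "t < 1" using d unfolding t_def by auto
  have "1 - t = 1 / (1 + d)" using d unfolding t_def by (simp add: field_simps)
  then have "t *\<^sub>R x0 + (1 - t) *\<^sub>R g d = (1/(1+d)) *\<^sub>R ((1+d) *\<^sub>R x)"
    unfolding g_def t_def using d by (simp add: algebra_simps divide_simps)
  also have "\<dots> = x" using d by simp
  finally show ?thesis using t y by metis
qed


lemma bounded_aff:
  fixes B :: "'a::{real_vector,topological_space} set"
  assumes tvs: "is_tvs TYPE('a)" and bd: "tvs_bounded B" and t: "t > 0"
  shows "tvs_bounded ((\<lambda>a. t *\<^sub>R a + c) ` B)"
  unfolding tvs_bounded_def
proof
  fix V :: "'a set" assume "V \<in> nbhds 0"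
  then obtain V1 where V1: "open V1" "0 \<in> V1" "V1 \<subseteq> V" unfolding nbhds_def by auto
  have a: "continuous_on UNIV (\<lambda>p::'a \<times> 'a. fst p + snd p)" using tvs unfolding is_tvs_def by auto
  have "open ((\<lambda>p::'a \<times> 'a. fst p + snd p) -` V1)" by (rule ovim[OF a V1(1)])
  moreover have "(0,0) \<in> (\<lambda>p::'a \<times> 'a. fst p + snd p) -` V1" using V1 by simp
  ultimately obtain A1 A2 where A: "open A1" "open A2" "(0,0) \<in> A1 \<times> A2"
     "A1 \<times> A2 \<subseteq> (\<lambda>p::'a \<times> 'a. fst p + snd p) -` V1" by (rule open_prod_elim)
  define W where "W = A1 \<inter> A2"
  have W: "open W" "0 \<in> W" using A unfolding W_def by auto
  have WW: "w1 + w2 \<in> V" if "w1 \<in> W" "w2 \<in> W" for w1 w2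
  proof -
    have "(w1, w2) \<in> A1 \<times> A2" using that unfolding W_def by auto
    then have "w1 + w2 \<in> V1" using A(4) by force
    then show ?thesis using V1 by auto
  qed
  have "W \<in> nbhds 0" using W unfolding nbhds_def by auto
  then obtain r1 where r1: "r1 > 0" "\<forall>s. \<bar>s\<bar> \<ge> r1 \<longrightarrow> B \<subseteq> (\<lambda>v. s *\<^sub>R v) ` W"
    using bd unfolding tvs_bounded_def by blast
  have cc: "continuous_on UNIV (\<lambda>s::real. s *\<^sub>R c)"
    by (intro tvs_scale[OF tvs] continuous_intros)
  have "open ((\<lambda>s::real. s *\<^sub>R c) -` W)" by (rule ovim[OF cc W(1)])
  moreover have "0 \<in> (\<lambda>s::real. s *\<^sub>R c) -` W" using W by simp
  ultimately obtain e where e: "e > 0" "ball 0 e \<subseteq> (\<lambda>s::real. s *\<^sub>R c) -` W"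
    using open_contains_ball by blast
  define r where "r = max (t * r1) (2 / e)"
  have r: "r > 0" using e r1 t unfolding r_def by (simp add: less_max_iff_disj)
  have "\<forall>s. \<bar>s\<bar> \<ge> r \<longrightarrow> (\<lambda>a. t *\<^sub>R a + c) ` B \<subseteq> (\<lambda>v. s *\<^sub>R v) ` V"
  proof (intro allI impI subsetI)
    fix s q assume s: "\<bar>s\<bar> \<ge> r" and q: "q \<in> (\<lambda>a. t *\<^sub>R a + c) ` B"
    then obtain a where aB: "a \<in> B" and qa: "q = t *\<^sub>R a + c" by auto
    have s0: "s \<noteq> 0" using s r by auto
    have "\<bar>s / t\<bar> \<ge> r1" using s t unfolding r_def by (simp add: abs_divide field_simps)
    then obtain w1 where w1: "w1 \<in> W" "a = (s/t) *\<^sub>R w1" using r1 aB by blast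
    have "\<bar>1/s\<bar> < e"
    proof -
      have "\<bar>s\<bar> \<ge> 2/e" using s unfolding r_def by auto
      then have "\<bar>s\<bar> * e \<ge> 2" using e by (simp add: field_simps)
      then show ?thesis using e s0 by (simp add: abs_divide field_simps)
    qed
    then have "1/s \<in> ball 0 e" by simp
    then have w2: "(1/s) *\<^sub>R c \<in> W" using e(2) by blast
    have "q = s *\<^sub>R (w1 + (1/s) *\<^sub>R c)" using qa w1 t s0 by (simp add: algebra_simps)
    then show "q \<in> (\<lambda>v. s *\<^sub>R v) ` V" using WW[OF w1(1) w2] by blast
  qed
  then show "\<exists>r>0. \<forall>s. \<bar>s\<bar> \<ge> r \<longrightarrow> (\<lambda>a. t *\<^sub>R a + c) ` B \<subseteq> (\<lambda>v. s *\<^sub>R v) ` V"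
    using r by blast
qed


lemma shift_eq:
  fixes x x0 y u :: "'a::real_vector"
  assumes "x = t *\<^sub>R x0 + (1 - t) *\<^sub>R y"
  shows "x + t *\<^sub>R (u - x0) = t *\<^sub>R u + (1 - t) *\<^sub>R y"
  using assms by (simp add: algebra_simps)

lemma part_lat:
  fixes f :: "'x::{real_vector,topological_space} \<Rightarrow> 'z::{real_vector,topological_space} set"
  assumes tvs: "is_tvs TYPE('x)" and cv: "sv_convex f"
    and L: "lattice_bounded_above_near f x0" and x: "x \<in> interior (sv_dom f)"
  shows "lattice_bounded_above_near f x"
proof -
  obtain U a where U: "U \<in> nbhds x0" "\<forall>u\<in>U. a \<in> f u"
    using L unfolding lattice_bounded_above_near_def lattice_bounded_above_on_def by blast
  obtain t y where ty: "0 < t" "t < 1" "y \<in> sv_dom f" "x = t *\<^sub>R x0 + (1 - t) *\<^sub>R y"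
    using decomp[OF tvs x] by blast
  obtain b where b: "b \<in> f y" using ty(3) unfolding sv_dom_def by auto
  have "(\<lambda>u. x + t *\<^sub>R (u - x0)) ` U \<in> nbhds x" by (rule aff_nbhd[OF tvs U(1) ty(1)])
  moreover have "\<forall>x'\<in>(\<lambda>u. x + t *\<^sub>R (u - x0)) ` U. t *\<^sub>R a + (1 - t) *\<^sub>R b \<in> f x'"
    using conv2[OF cv ty(1,2) _ b] U(2) shift_eq[OF ty(4)] by auto
  ultimately show ?thesis unfolding lattice_bounded_above_near_def lattice_bounded_above_on_def by blast
qed

lemma part_eff:
  fixes f :: "'x::{real_vector,topological_space} \<Rightarrow> 'z::{real_vector,topological_space} set"
  assumes tvs: "is_tvs TYPE('x)" and tvsz: "is_tvs TYPE('z)" and cv: "sv_convex f"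
    and L: "efficient_at f x0" and x: "x \<in> interior (sv_dom f)"
  shows "efficient_at f x"
proof -
  obtain U B where U: "U \<in> nbhds x0" "tvs_bounded B" "\<forall>u\<in>U. f u \<inter> B \<noteq> {}"
    using L unfolding efficient_at_def by blast
  obtain t y where ty: "0 < t" "t < 1" "y \<in> sv_dom f" "x = t *\<^sub>R x0 + (1 - t) *\<^sub>R y"
    using decomp[OF tvs x] by blast
  obtain b where b: "b \<in> f y" using ty(3) unfolding sv_dom_def by auto
  have "(\<lambda>u. x + t *\<^sub>R (u - x0)) ` U \<in> nbhds x" by (rule aff_nbhd[OF tvs U(1) ty(1)])
  moreover have "tvs_bounded ((\<lambda>a. t *\<^sub>R a + (1 - t) *\<^sub>R b) ` B)"
    by (rule bounded_aff[OF tvsz U(2) ty(1)])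
  moreover have "\<forall>x'\<in>(\<lambda>u. x + t *\<^sub>R (u - x0)) ` U. f x' \<inter> (\<lambda>a. t *\<^sub>R a + (1 - t) *\<^sub>R b) ` B \<noteq> {}"
  proof
    fix x' assume "x' \<in> (\<lambda>u. x + t *\<^sub>R (u - x0)) ` U"
    then obtain u where u: "u \<in> U" "x' = x + t *\<^sub>R (u - x0)" by auto
    then obtain a where a: "a \<in> f u" "a \<in> B" using U(3) by blast
    have "t *\<^sub>R a + (1 - t) *\<^sub>R b \<in> f x'"
      using conv2[OF cv ty(1,2) a(1) b] u(2) shift_eq[OF ty(4)] by auto
    then show "f x' \<inter> (\<lambda>a. t *\<^sub>R a + (1 - t) *\<^sub>R b) ` B \<noteq> {}" using a(2) by blast
  qed
  ultimately show ?thesis unfolding efficient_at_def by blast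
qed

lemma part_usc:
  fixes f :: "'x::{real_vector,topological_space} \<Rightarrow> 'z::{real_vector,topological_space} set"
  assumes tvs: "is_tvs TYPE('x)" and tvsz: "is_tvs TYPE('z)" and cv: "sv_convex f"
    and x0: "x0 \<in> sv_dom f"
    and L: "upper_lattice_sc f x0" and x: "x \<in> interior (sv_dom f)"
  shows "upper_lattice_sc f x"
proof -
  obtain z0 where "z0 \<in> f x0" using x0 unfolding sv_dom_def by auto
  then have "(\<Union>U\<in>nbhds x0. \<Inter>x\<in>U. f x) \<noteq> {}" using L unfolding upper_lattice_sc_def by (metis closure_empty empty_iff subsetD)
  then have "lattice_bounded_above_near f x0"
    unfolding lattice_bounded_above_near_def lattice_bounded_above_on_def by blast
  then have "lattice_bounded_above_near f x" by (rule part_lat[OF tvs cv _ x])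
  then obtain U a where U: "U \<in> nbhds x" "\<forall>u\<in>U. a \<in> f u"
    unfolding lattice_bounded_above_near_def lattice_bounded_above_on_def by blast
  show ?thesis unfolding upper_lattice_sc_def
  proof
    fix z assume z: "z \<in> f x"
    show "z \<in> closure (\<Union>U\<in>nbhds x. \<Inter>x\<in>U. f x)"
      unfolding closure_iff_nhds_not_empty
    proof (intro allI impI)
      fix A S assume S: "S \<subseteq> A" "open S" "z \<in> S"
      obtain k where k: "0 < k" "k < 1" "k *\<^sub>R a + (1 - k) *\<^sub>R z \<in> S"
        using small_kappa[OF tvsz S(2,3)] by blast
      have N: "(\<lambda>u. x + k *\<^sub>R (u - x)) ` U \<in> nbhds x" by (rule aff_nbhd[OF tvs U(1) k(1)])
      have "\<forall>x'\<in>(\<lambda>u. x + k *\<^sub>R (u - x)) ` U. k *\<^sub>R a + (1 - k) *\<^sub>R z \<in> f x'"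
      proof
        fix x' assume "x' \<in> (\<lambda>u. x + k *\<^sub>R (u - x)) ` U"
        then obtain u where u: "u \<in> U" "x' = x + k *\<^sub>R (u - x)" by auto
        have "x' = k *\<^sub>R u + (1 - k) *\<^sub>R x" using u(2) by (simp add: algebra_simps)
        then show "k *\<^sub>R a + (1 - k) *\<^sub>R z \<in> f x'" using conv2[OF cv k(1,2) _ z] U(2) u(1) by auto
      qed
      then have "k *\<^sub>R a + (1 - k) *\<^sub>R z \<in> (\<Union>U\<in>nbhds x. \<Inter>x\<in>U. f x)" using N by blast
      then show "(\<Union>U\<in>nbhds x. \<Inter>x\<in>U. f x) \<inter> A \<noteq> {}" using k(3) S(1) by blast
    qed
  qed
qed

lemma part_low:
  fixes f :: "'x::{real_vector,topological_space} \<Rightarrow> 'z::{real_vector,topological_space} set"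
  assumes tvs: "is_tvs TYPE('x)" and tvsz: "is_tvs TYPE('z)" and cv: "sv_convex f"
    and x0: "x0 \<in> sv_dom f"
    and L: "lower_continuous_at f x0" and x: "x \<in> interior (sv_dom f)"
  shows "lower_continuous_at f x"
  unfolding lower_continuous_at_def
proof (intro ballI)
  fix z V assume z: "z \<in> f x" and V: "V \<in> nbhds z"
  obtain V' where V': "open V'" "z \<in> V'" "V' \<subseteq> V" using V unfolding nbhds_def by auto
  obtain t y where ty: "0 < t" "t < 1" "y \<in> sv_dom f" "x = t *\<^sub>R x0 + (1 - t) *\<^sub>R y"
    using decomp[OF tvs x] by blast
  obtain b where b: "b \<in> f y" using ty(3) unfolding sv_dom_def by auto
  obtain z0 where z0: "z0 \<in> f x0" using x0 unfolding sv_dom_def by auto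
  obtain k where k: "0 < k" "k < 1" "k *\<^sub>R (t *\<^sub>R z0 + (1 - t) *\<^sub>R b) + (1 - k) *\<^sub>R z \<in> V'"
    using small_kappa[OF tvsz V'(1,2)] by blast
  define phi where "phi = (\<lambda>a. k *\<^sub>R (t *\<^sub>R a + (1 - t) *\<^sub>R b) + (1 - k) *\<^sub>R z)"
  have "phi = (\<lambda>a. (k *\<^sub>R (1 - t) *\<^sub>R b + (1 - k) *\<^sub>R z) + (k * t) *\<^sub>R a)"
    unfolding phi_def by (auto simp: algebra_simps)
  then have pc: "continuous_on UNIV phi" using tvs_affine_cont[OF tvsz] by simp
  have "open (phi -` V')" by (rule ovim[OF pc V'(1)])
  moreover have "z0 \<in> phi -` V'" using k(3) unfolding phi_def by simp
  ultimately have "phi -` V' \<in> nbhds z0" unfolding nbhds_def by blast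
  then obtain U where U: "U \<in> nbhds x0" "\<forall>u\<in>U. f u \<inter> phi -` V' \<noteq> {}"
    using L z0 unfolding lower_continuous_at_def by blast
  have kt: "k * t > 0" using k ty by simp
  have N: "(\<lambda>u. x + (k * t) *\<^sub>R (u - x0)) ` U \<in> nbhds x" by (rule aff_nbhd[OF tvs U(1) kt])
  have "\<forall>x'\<in>(\<lambda>u. x + (k * t) *\<^sub>R (u - x0)) ` U. f x' \<inter> V \<noteq> {}"
  proof
    fix x' assume "x' \<in> (\<lambda>u. x + (k * t) *\<^sub>R (u - x0)) ` U"
    then obtain u where u: "u \<in> U" "x' = x + (k * t) *\<^sub>R (u - x0)" by auto
    then obtain a where a: "a \<in> f u" "phi a \<in> V'" using U(2) by blast
    have v: "t *\<^sub>R a + (1 - t) *\<^sub>R b \<in> f (t *\<^sub>R u + (1 - t) *\<^sub>R y)" by (rule conv2[OF cv ty(1,2) a(1) b])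
    have "x' = k *\<^sub>R (x + t *\<^sub>R (u - x0)) + (1 - k) *\<^sub>R x" using u(2) by (simp add: algebra_simps)
    also have "\<dots> = k *\<^sub>R (t *\<^sub>R u + (1 - t) *\<^sub>R y) + (1 - k) *\<^sub>R x" using shift_eq[OF ty(4)] by simp
    finally have "phi a \<in> f x'" unfolding phi_def using conv2[OF cv k(1,2) v z] by simp
    then show "f x' \<inter> V \<noteq> {}" using a(2) V'(3) by blast
  qed
  then show "\<exists>U\<in>nbhds x. \<forall>x'\<in>U. f x' \<inter> V \<noteq> {}" using N by blast
qed

theorem mainTheorem12:
  fixes f :: "'x::{real_vector,topological_space} \<Rightarrow> 'z::{real_vector,topological_space} set"
    and C :: "'z set" and x0 :: 'x
  assumes "is_tvs TYPE('x)" and "is_tvs TYPE('z)"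
    and "C \<noteq> {}" and "closed C" and "convex C" and "cone C"
    and "neg_dual_cone C \<noteq> {(\<lambda>z. 0)}"
    and "\<forall>x. f x \<in> FZC C"
    and "sv_convex f"
    and "x0 \<in> sv_dom f"
  shows "(lattice_bounded_above_near f x0 \<longrightarrow>
            (\<forall>x\<in>interior (sv_dom f). lattice_bounded_above_near f x))
       \<and> (efficient_at f x0 \<longrightarrow> (\<forall>x\<in>interior (sv_dom f). efficient_at f x))
       \<and> (upper_lattice_sc f x0 \<longrightarrow> (\<forall>x\<in>interior (sv_dom f). upper_lattice_sc f x))
       \<and> (lower_continuous_at f x0 \<longrightarrow> (\<forall>x\<in>interior (sv_dom f). lower_continuous_at f x))"
  using part_lat[OF assms(1,9)] part_eff[OF assms(1,2,9)]
    part_usc[OF assms(1,2,9,10)] part_low[OF assms(1,2,9,10)] by blast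

end
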